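(* Let $n \geq 1$. For full-rank lattices $L, L' \subset \mathbb{R}^n$ define $$\mathrm{scale}(L,L') = \min\{ s > 0 : R(V(L)) \subset s\,V(L') \text{ for some } R \in SO(n)\},$$ $$d_s(L,L') = \ln\big(\max\{ \mathrm{scale}(L,L'), \mathrm{scale}(L',L)\}\big)$$ (natural logarithm). Then $d_s$ is independent of the representation of the lattices (it depends only on the lattices $L, L'$ as point sets, not on chosen bases or unit cells), and it satisfies: (a) $d_s(L,L') \geq 0$, and $d_s(L,L') = 0$ if and only if $L$ and $L'$ are equivalent, i.e. $R(L) = L'$ for some $R \in SO(n)$; (b) $d_s(L,L') = d_s(L',L)$ for all $L, L'$; (c) $d_s(L,L') + d_s(L',L'') \geq d_s(L,L'')$ for all $L, L', L''$; (d) $d_s$ changes continuously under perturbations of the lattices: if $L(B)$ denotes the lattice generated by the columns of an invertible real $n\times n$ matrix $B$, then $(B,B') \mapsto d_s(L(B),L(B'))$ is continuous on $GL_n(\mathbb{R}) \times GL_n(\mathbb{R})$; (e) $d_s(\lambda L, \lambda L') = d_s(L,L')$ for every $\lambda > 0$, where $\lambda L = \{\lambda p : p \in L\}$.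
   Context: A (full-rank) lattice in $\mathbb{R}^n$ is the set $L = \{ x_1 u_1 + \dots + x_n u_n : x_i \in \mathbb{Z}\}$ for a basis $u_1,\dots,u_n$ of $\mathbb{R}^n$; in particular $0 \in L$. The Voronoi cell of $L$ is $V(L) = \{ p \in \mathbb{R}^n : d(p,0) \leq d(p,q) \text{ for all } q \in L \setminus \{0\}\}$, where $d$ is the Euclidean distance; it is a convex polytope centrally symmetric about $0$ with nonempty interior. For $s>0$ and $C\subset\mathbb{R}^n$, $sC = \{ s p : p \in C\}$. $SO(n)$ is the group of real $n \times n$ orthogonal matrices of determinant $1$ (rotations about the origin). Two lattices are called equivalent if one is obtained from the other by an orientation-preserving rigid motion of $\mathbb{R}^n$; for lattices (which contain $0$) this is the same as $R(L)=L'$ for some $R\in SO(n)$. *)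

theory Defs
  imports "HOL-Analysis.Analysis"
begin

definition lattice_gen :: "real^'n^'n \<Rightarrow> (real^'n) set" where
  "lattice_gen B = {B *v x | x. \<forall>i. x $ i \<in> \<int>}"

definition is_lattice :: "(real^'n) set \<Rightarrow> bool" where
  "is_lattice L \<longleftrightarrow> (\<exists>B. invertible B \<and> L = lattice_gen B)"

definition voronoi :: "(real^'n) set \<Rightarrow> (real^'n) set" where
  "voronoi L = {p. \<forall>q \<in> L - {0}. dist p 0 \<le> dist p q}"

definition rotation :: "real^'n^'n \<Rightarrow> bool" where
  "rotation R \<longleftrightarrow> orthogonal_matrix R \<and> det R = 1"

definition scale :: "(real^'n) set \<Rightarrow> (real^'n) set \<Rightarrow> real" where
  "scale L L' = Inf {s. s > 0 \<and> (\<exists>R. rotation R \<and> (\<lambda>p. R *v p) ` voronoi L \<subseteq> (\<lambda>p. s *\<^sub>R p) ` voronoi L')}"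

definition ds :: "(real^'n) set \<Rightarrow> (real^'n) set \<Rightarrow> real" where
  "ds L L' = ln (max (scale L L') (scale L' L))"

end

theory Submission
  imports Defs
begin

lemma mv_norm_le:
  fixes A :: "real^'n^'m"
  shows "norm (A *v x) \<le> (real CARD('m) * real CARD('n) * norm A) * norm x"
proof -
  have "onorm ((*v) A) \<le> real CARD('m) * real CARD('n) * norm A"
    proof (rule onorm_le_matrix_component)
    fix i j show "\<bar>A $ i $ j\<bar> \<le> norm A"
      using component_le_norm_cart[of "A$i" j] Finite_Cartesian_Product.norm_nth_le[of A i] by linarith
  qed
  moreover have "norm (A *v x) \<le> onorm ((*v) A) * norm x" by (rule onorm) simp
  ultimately show ?thesis by (meson mult_right_mono norm_ge_zero order_trans)
qed

lemma orth_norm: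
  fixes Q :: "real^'n^'n"
  assumes "orthogonal_matrix Q"
  shows "norm (Q *v x) = norm x"
  using assms orthogonal_transformation_matrix[of "(*v) Q"]
  by (simp add: orthogonal_transformation_norm)

lemma int_vec_norm_ge1:
  fixes x :: "real^'n"
  assumes "\<forall>i. x $ i \<in> \<int>" "x \<noteq> 0"
  shows "norm x \<ge> 1"
proof -
  obtain i where "x $ i \<noteq> 0" using assms(2) by (metis vec_eq_iff zero_index)
  then have "\<bar>x $ i\<bar> \<ge> 1" using assms(1) Ints_nonzero_abs_ge1 by blast
  then show ?thesis using component_le_norm_cart[of x i] by linarith
qed

lemma inv_bound:
  fixes B :: "real^'n^'n"
  assumes "invertible B"
  obtains K where "K > 0" "\<And>x. norm x \<le> K * norm (B *v x)"
proof -
  obtain B' where B': "B' ** B = mat 1" using assms unfolding invertible_def by blast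
  define K where "K = real CARD('n) * real CARD('n) * norm B' + 1"
  have "K > 0" unfolding K_def by (simp add: add_nonneg_pos)
  moreover have "norm x \<le> K * norm (B *v x)" for x
  proof -
    have "x = B' *v (B *v x)" by (simp add: matrix_vector_mul_assoc B')
    then have "norm x \<le> (real CARD('n) * real CARD('n) * norm B') * norm (B *v x)"
      by (metis mv_norm_le)
    also have "\<dots> \<le> K * norm (B *v x)" unfolding K_def
      by (simp add: mult_right_mono)
    finally show ?thesis .
  qed
  ultimately show ?thesis using that by blast
qed

definition zvec :: "real^'n \<Rightarrow> bool" where "zvec x \<longleftrightarrow> (\<forall>i. x $ i \<in> \<int>)"

lemma lat_mem: "q \<in> lattice_gen B \<longleftrightarrow> (\<exists>x. zvec x \<and> q = B *v x)"
  unfolding lattice_gen_def zvec_def by auto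

lemma lat_0: "0 \<in> lattice_gen B"
  unfolding lat_mem zvec_def by (rule exI[of _ 0]) auto

lemma lat_add: "a \<in> lattice_gen B \<Longrightarrow> b \<in> lattice_gen B \<Longrightarrow> a + b \<in> lattice_gen B"
  unfolding lat_mem zvec_def
  by (metis (no_types, lifting) Ints_add matrix_vector_right_distrib vector_add_component)

lemma lat_minus: "a \<in> lattice_gen B \<Longrightarrow> - a \<in> lattice_gen B"
  unfolding lat_mem zvec_def
  by (metis Ints_minus matrix_vector_mult_diff_distrib diff_0 matrix_vector_mult_0_right vector_uminus_component)

lemma lat_diff: "a \<in> lattice_gen B \<Longrightarrow> b \<in> lattice_gen B \<Longrightarrow> a - b \<in> lattice_gen B"
  using lat_add[of a B "-b"] lat_minus[of b B] by simp

lemma lat_norm_ge: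
  assumes "\<And>x. norm x \<le> K * norm (B *v x)" "K > 0"
  assumes "q \<in> lattice_gen B" "q \<noteq> 0"
  shows "norm q \<ge> 1 / K"
proof -
  obtain x where x: "zvec x" "q = B *v x" using assms(3) lat_mem by blast
  have "x \<noteq> 0" using x assms(4) by auto
  then have "1 \<le> norm x" using int_vec_norm_ge1 x(1) unfolding zvec_def by blast
  also have "\<dots> \<le> K * norm q" using assms(1) x by simp
  finally show ?thesis using assms(2) by (simp add: field_simps)
qed

lemma finite_zvec_box: "finite {x::real^'n. zvec x \<and> norm x \<le> r}"
proof -
  define N where "N = \<lceil>r\<rceil>"
  have "{x::real^'n. zvec x \<and> norm x \<le> r} \<subseteq>
        (\<lambda>f. \<chi> i. real_of_int (f i)) ` (PiE UNIV (\<lambda>_. {-N..N}))"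
  proof
    fix x :: "real^'n" assume "x \<in> {x. zvec x \<and> norm x \<le> r}"
    then have z: "\<And>i. x $ i \<in> \<int>" and nr: "norm x \<le> r" unfolding zvec_def by auto
    define f where "f = (\<lambda>i. \<lfloor>x $ i\<rfloor>)"
    have "x = (\<chi> i. real_of_int (f i))"
      unfolding f_def by (simp add: vec_eq_iff) (metis z floor_of_int Ints_cases)
    moreover have "f \<in> PiE UNIV (\<lambda>_. {-N..N})"
    proof -
      have "\<bar>x $ i\<bar> \<le> r" for i using component_le_norm_cart[of x i] nr by linarith
      then have "f i \<in> {-N..N}" for i
      proof -
        have a: "-r \<le> x $ i" "x $ i \<le> r" using \<open>\<bar>x $ i\<bar> \<le> r\<close> by auto
        have "f i \<le> \<lfloor>r\<rfloor>" unfolding f_def using a(2) by (rule floor_mono)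
        moreover have "\<lfloor>r\<rfloor> \<le> N" unfolding N_def by (rule floor_le_ceiling)
        moreover have "\<lfloor>-r\<rfloor> \<le> f i" unfolding f_def using a(1) by (rule floor_mono)
        moreover have "\<lfloor>-r\<rfloor> = -N" unfolding N_def ceiling_def by simp
        ultimately show ?thesis by auto
      qed
      then show ?thesis by (simp add: PiE_UNIV_domain)
    qed
    ultimately show "x \<in> (\<lambda>f. \<chi> i. real_of_int (f i)) ` (PiE UNIV (\<lambda>_. {-N..N}))" by blast
  qed
  moreover have "finite (PiE (UNIV::'n set) (\<lambda>_. {-N..N}))" by (rule finite_PiE) auto
  ultimately show ?thesis using finite_subset by blast
qed

lemma lat_finite:
  assumes "\<And>x. norm x \<le> K * norm (B *v x)" "K > 0"
  shows "finite {q \<in> lattice_gen B. norm q \<le> r}"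
proof -
  have "{q \<in> lattice_gen B. norm q \<le> r} \<subseteq> (*v) B ` {x. zvec x \<and> norm x \<le> K * r}"
  proof
    fix q assume "q \<in> {q \<in> lattice_gen B. norm q \<le> r}"
    then obtain x where "zvec x" "q = B *v x" "norm q \<le> r" using lat_mem by blast
    moreover have "norm x \<le> K * r" using assms(1)[of x] assms(2) calculation
      by (meson mult_left_mono less_imp_le order_trans)
    ultimately show "q \<in> (*v) B ` {x. zvec x \<and> norm x \<le> K * r}" by blast
  qed
  then show ?thesis using finite_zvec_box finite_subset by blast
qed

definition covc :: "real^'n^'n \<Rightarrow> real" where
  "covc B = real CARD('n) * real CARD('n) * norm B * real CARD('n)"

lemma lat_cover:
  fixes B :: "real^'n^'n"
  assumes "invertible B"
  shows "\<exists>q\<in>lattice_gen B. norm (p - q) \<le> covc B"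
proof -
  obtain B' where B': "B ** B' = mat 1" using assms unfolding invertible_def by blast
  define y where "y = B' *v p"
  define x :: "real^'n" where "x = (\<chi> i. real_of_int \<lfloor>y $ i\<rfloor>)"
  have zx: "zvec x" unfolding zvec_def x_def by simp
  have py: "p = B *v y" unfolding y_def by (simp add: matrix_vector_mul_assoc B')
  have "norm (y - x) \<le> (\<Sum>i\<in>UNIV. \<bar>(y - x) $ i\<bar>)" by (rule norm_le_l1_cart)
  also have "\<dots> \<le> (\<Sum>i\<in>(UNIV::'n set). 1)"
    by (rule sum_mono) (simp add: x_def, linarith)
  finally have n1: "norm (y - x) \<le> real CARD('n)" by simp
  have "norm (p - B *v x) = norm (B *v (y - x))" by (simp add: py matrix_vector_mult_diff_distrib)
  also have "\<dots> \<le> (real CARD('n) * real CARD('n) * norm B) * norm (y - x)" by (rule mv_norm_le)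
  also have "\<dots> \<le> covc B" unfolding covc_def by (rule mult_left_mono[OF n1]) simp
  finally show ?thesis using zx lat_mem by blast
qed

lemma vor_iff: "p \<in> voronoi L \<longleftrightarrow> (\<forall>q\<in>L-{0}. 2 * (p \<bullet> q) \<le> q \<bullet> q)"
proof -
  have "dist p 0 \<le> dist p q \<longleftrightarrow> 2 * (p \<bullet> q) \<le> q \<bullet> q" for q
    by (simp add: dist_norm norm_le inner_diff inner_commute)
  then show ?thesis unfolding voronoi_def by auto
qed

lemma vor_bounded:
  fixes B :: "real^'n^'n"
  assumes "invertible B" "p \<in> voronoi (lattice_gen B)"
  shows "norm p \<le> covc B"
proof -
  obtain q where q: "q \<in> lattice_gen B" "norm (p - q) \<le> covc B" using lat_cover assms(1) by blast
  show ?thesis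
  proof (cases "q = 0")
    case True then show ?thesis using q by simp
  next
    case False
    then have "dist p 0 \<le> dist p q" using assms(2) q(1) unfolding voronoi_def by auto
    then show ?thesis using q by (simp add: dist_norm)
  qed
qed

lemma vor_ball:
  assumes "\<And>x. norm x \<le> K * norm (B *v x)" "K > 0" "norm p \<le> 1 / (2 * K)"
  shows "p \<in> voronoi (lattice_gen B)"
  unfolding vor_iff
proof
  fix q assume q: "q \<in> lattice_gen B - {0}"
  then have nq: "norm q \<ge> 1 / K" using lat_norm_ge[OF assms(1,2)] by blast
  have "2 * (p \<bullet> q) \<le> 2 * (norm p * norm q)" using norm_cauchy_schwarz by simp
  also have "\<dots> \<le> 2 * (1 / (2 * K) * norm q)" using mult_right_mono[OF assms(3), of "norm q"] by simp
  also have "\<dots> = (1 / K) * norm q" using assms(2) by simp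
  also have "\<dots> \<le> norm q * norm q" using mult_right_mono[OF nq, of "norm q"] by (simp add: mult.commute)
  also have "\<dots> = q \<bullet> q" by (simp add: dot_square_norm power2_eq_square)
  finally show "2 * (p \<bullet> q) \<le> q \<bullet> q" .
qed

lemma vor_closed: "closed (voronoi L)"
proof -
  have "voronoi L = (\<Inter>q\<in>L-{0}. {p. dist p 0 \<le> dist p q})" unfolding voronoi_def by auto
  moreover have "closed {p. dist p 0 \<le> dist p q}" for q :: "real^'n"
    by (intro closed_Collect_le continuous_intros)
  ultimately show ?thesis by auto
qed

lemma vor_0: "0 \<in> voronoi L" unfolding voronoi_def by simp

definition SS :: "(real^'n) set \<Rightarrow> (real^'n) set \<Rightarrow> real set" where
  "SS L L' = {s. s > 0 \<and> (\<exists>R. rotation R \<and> (\<lambda>p. R *v p) ` voronoi L \<subseteq> (\<lambda>p. s *\<^sub>R p) ` voronoi L')}"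

lemma scale_SS: "scale L L' = Inf (SS L L')"
  unfolding scale_def SS_def ..

lemma rot_mul: "rotation R \<Longrightarrow> rotation R' \<Longrightarrow> rotation (R' ** R)"
  unfolding rotation_def by (simp add: orthogonal_matrix_mul det_mul)

lemma rot_id: "rotation (mat 1)"
  unfolding rotation_def by (simp add: orthogonal_matrix_id)

lemma rot_transpose: "rotation R \<Longrightarrow> rotation (transpose R)"
  unfolding rotation_def by simp

lemma rot_norm: "rotation R \<Longrightarrow> norm (R *v x) = norm x"
  unfolding rotation_def using orth_norm by blast

lemma in_scaled:
  fixes x :: "'a::real_vector"
  assumes "s \<noteq> 0"
  shows "x \<in> (\<lambda>p. s *\<^sub>R p) ` V \<longleftrightarrow> (1/s) *\<^sub>R x \<in> V"
proof
  assume "x \<in> (\<lambda>p. s *\<^sub>R p) ` V"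
  then obtain p where "p \<in> V" "x = s *\<^sub>R p" by blast
  then show "(1/s) *\<^sub>R x \<in> V" using assms by (simp add: scaleR_scaleR)
next
  assume "(1/s) *\<^sub>R x \<in> V"
  moreover have "x = s *\<^sub>R ((1/s) *\<^sub>R x)" using assms by simp
  ultimately show "x \<in> (\<lambda>p. s *\<^sub>R p) ` V" by (rule rev_image_eqI)
qed

lemma lattice_props:
  assumes "is_lattice L"
  obtains B K where "invertible B" "L = lattice_gen B" "K > 0" "\<And>x. norm x \<le> K * norm (B *v x)"
  using assms unfolding is_lattice_def by (metis inv_bound)

lemma vor_bdd:
  assumes "is_lattice L"
  obtains C where "C > 0" "\<And>p. p \<in> voronoi L \<Longrightarrow> norm p \<le> C"
proof -
  obtain B K where "invertible B" "L = lattice_gen B" using assms lattice_props by blast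
  moreover have "covc B \<ge> 0" unfolding covc_def by simp
  ultimately show ?thesis
  proof (intro that[of "covc B + 1"])
    fix p assume "p \<in> voronoi L"
    then have "norm p \<le> covc B" using vor_bounded \<open>invertible B\<close> \<open>L = lattice_gen B\<close> by blast
    then show "norm p \<le> covc B + 1" by linarith
  qed simp
qed

lemma vor_ball_ex:
  assumes "is_lattice L"
  obtains m where "m > 0" "\<And>p. norm p \<le> m \<Longrightarrow> p \<in> voronoi L"
proof -
  obtain B K where "invertible B" "L = lattice_gen B" "K > 0" "\<And>x. norm x \<le> K * norm (B *v x)"
    using assms lattice_props by blast
  then show ?thesis using vor_ball[of K B] that[of "1/(2*K)"] by simp
qed

lemma SS_nonempty:
  assumes "is_lattice L" "is_lattice L'"
  shows "SS L L' \<noteq> {}"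
proof -
  obtain C where C: "C > 0" "\<And>p. p \<in> voronoi L \<Longrightarrow> norm p \<le> C" using vor_bdd assms(1) by blast
  obtain m where m: "m > 0" "\<And>p. norm p \<le> m \<Longrightarrow> p \<in> voronoi L'" using vor_ball_ex assms(2) by blast
  define s where "s = C / m"
  have s: "s > 0" unfolding s_def using C m by simp
  have "(\<lambda>p. mat 1 *v p) ` voronoi L \<subseteq> (\<lambda>p. s *\<^sub>R p) ` voronoi L'"
  proof
    fix x assume "x \<in> (\<lambda>p. mat 1 *v p) ` voronoi L"
    then have x: "x \<in> voronoi L" by simp
    have "norm ((1/s) *\<^sub>R x) = norm x / s" using s by simp
    also have "\<dots> \<le> C / s" using C(2)[OF x] s by (simp add: divide_right_mono)
    also have "\<dots> = m" unfolding s_def using C m by simp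
    finally show "x \<in> (\<lambda>p. s *\<^sub>R p) ` voronoi L'" using in_scaled[of s x] s m(2) by simp
  qed
  then have "s \<in> SS L L'" unfolding SS_def using s rot_id by blast
  then show ?thesis by blast
qed

lemma SS_pos: "s \<in> SS L L' \<Longrightarrow> s > 0" unfolding SS_def by simp

lemma SS_prod:
  fixes L L' :: "(real^'n) set"
  assumes "is_lattice L" "s \<in> SS L L'" "t \<in> SS L' L"
  shows "s * t \<ge> 1"
proof (rule ccontr)
  assume st: "\<not> s * t \<ge> 1"
  obtain R where R: "rotation R" "(\<lambda>p. R *v p) ` voronoi L \<subseteq> (\<lambda>p. s *\<^sub>R p) ` voronoi L'"
    and s: "s > 0" using assms(2) unfolding SS_def by blast
  obtain R' where R': "rotation R'" "(\<lambda>p. R' *v p) ` voronoi L' \<subseteq> (\<lambda>p. t *\<^sub>R p) ` voronoi L"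
    and t: "t > 0" using assms(3) unfolding SS_def by blast
  obtain C where C: "C > 0" "\<And>p. p \<in> voronoi L \<Longrightarrow> norm p \<le> C" using vor_bdd assms(1) by blast
  obtain m where m: "m > 0" "\<And>p. norm p \<le> m \<Longrightarrow> p \<in> voronoi L" using vor_ball_ex assms(1) by blast
  define r where "r = Sup (norm ` voronoi L)"
  have bdd: "bdd_above (norm ` voronoi L)" using C by (meson bdd_aboveI2)
  define p0 :: "real^'n" where "p0 = m *\<^sub>R axis undefined 1"
  have "norm p0 = m" unfolding p0_def using m by (simp add: norm_axis_1)
  then have p0: "p0 \<in> voronoi L" using m by simp
  have "m \<le> r" unfolding r_def using cSup_upper[OF imageI[OF p0] bdd] \<open>norm p0 = m\<close> by simp
  then have "r > 0" using m by linarith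
  then have "s * t * r < 1 * r" using st by (intro mult_strict_right_mono) auto
  then have "s * t * r < r" by simp
  then obtain p where p: "p \<in> voronoi L" "s * t * r < norm p"
    unfolding r_def using less_cSup_iff[OF _ bdd] p0 by blast
  obtain v' where v': "v' \<in> voronoi L'" "R *v p = s *\<^sub>R v'" using R(2) p(1) by blast
  obtain v where v: "v \<in> voronoi L" "R' *v v' = t *\<^sub>R v" using R'(2) v'(1) by blast
  have "norm p = s * norm v'" using rot_norm[OF R(1), of p] v'(2) s by simp
  also have "\<dots> = s * (t * norm v)" using rot_norm[OF R'(1), of v'] v(2) t by simp
  also have "\<dots> \<le> s * (t * r)" unfolding r_def using cSup_upper[OF imageI[OF v(1)] bdd] s t
    by (simp add: mult_left_mono)
  finally show False using p(2) by (simp add: mult.assoc)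
qed

lemma scale_pos:
  assumes "is_lattice L" "is_lattice L'"
  shows "scale L L' > 0"
proof -
  obtain t where t: "t \<in> SS L' L" using SS_nonempty assms by blast
  have "1 / t \<le> scale L L'" unfolding scale_SS
  proof (rule cInf_greatest)
    show "SS L L' \<noteq> {}" using SS_nonempty assms by blast
    fix s assume "s \<in> SS L L'"
    then show "1 / t \<le> s" using SS_prod[OF assms(1) _ t] SS_pos[OF t]
      by (simp add: pos_divide_le_eq)
  qed
  moreover have "0 < 1 / t" using SS_pos[OF t] by simp
  ultimately show ?thesis by linarith
qed

lemma SS_bdd: "bdd_below (SS L L')"
  unfolding SS_def by (rule bdd_belowI[of _ 0]) auto

lemma scale_ge_inv:
  assumes "is_lattice L" "is_lattice L'" "t \<in> SS L' L"
  shows "1 / t \<le> scale L L'"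
  unfolding scale_SS
proof (rule cInf_greatest)
  show "SS L L' \<noteq> {}" using SS_nonempty assms by blast
  fix s assume "s \<in> SS L L'"
  then show "1 / t \<le> s" using SS_prod[OF assms(1) _ assms(3)] SS_pos[OF assms(3)]
    by (simp add: pos_divide_le_eq)
qed

lemma scale_prod_ge1:
  assumes "is_lattice L" "is_lattice L'"
  shows "scale L L' * scale L' L \<ge> 1"
proof -
  have a: "scale L L' > 0" using scale_pos assms by blast
  have "1 / scale L L' \<le> scale L' L" unfolding scale_SS[of L' L]
  proof (rule cInf_greatest)
    show "SS L' L \<noteq> {}" using SS_nonempty assms by blast
    fix t assume t: "t \<in> SS L' L"
    have "1 / t \<le> scale L L'" using scale_ge_inv assms t by blast
    then show "1 / scale L L' \<le> t" using a SS_pos[OF t]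
      by (simp add: divide_le_eq mult.commute)
  qed
  then show ?thesis using a by (simp add: divide_le_eq mult.commute)
qed

lemma SS_comp:
  assumes "s \<in> SS L L'" "t \<in> SS L' L''"
  shows "s * t \<in> SS L L''"
proof -
  obtain R where R: "rotation R" "(\<lambda>p. R *v p) ` voronoi L \<subseteq> (\<lambda>p. s *\<^sub>R p) ` voronoi L'"
    and s: "s > 0" using assms(1) unfolding SS_def by blast
  obtain R' where R': "rotation R'" "(\<lambda>p. R' *v p) ` voronoi L' \<subseteq> (\<lambda>p. t *\<^sub>R p) ` voronoi L''"
    and t: "t > 0" using assms(2) unfolding SS_def by blast
  have incl: "(\<lambda>p. (R' ** R) *v p) ` voronoi L \<subseteq> (\<lambda>p. (s * t) *\<^sub>R p) ` voronoi L''"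
  proof
    fix x assume "x \<in> (\<lambda>p. (R' ** R) *v p) ` voronoi L"
    then obtain p where p: "p \<in> voronoi L" "x = R' *v (R *v p)"
      by (auto simp: matrix_vector_mul_assoc)
    obtain v' where v': "v' \<in> voronoi L'" "R *v p = s *\<^sub>R v'" using R(2) p(1) by blast
    obtain v where v: "v \<in> voronoi L''" "R' *v v' = t *\<^sub>R v" using R'(2) v'(1) by blast
    have "x = (s * t) *\<^sub>R v" using p(2) v'(2) v(2) by (simp add: matrix_vector_mult_scaleR)
    then show "x \<in> (\<lambda>p. (s * t) *\<^sub>R p) ` voronoi L''" using v(1) by blast
  qed
  have st: "s * t > 0" using s t by simp
  have ex: "\<exists>R. rotation R \<and> (\<lambda>p. R *v p) ` voronoi L \<subseteq> (\<lambda>p. (s * t) *\<^sub>R p) ` voronoi L''"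
    by (rule exI[of _ "R' ** R"]) (rule conjI[OF rot_mul[OF R(1) R'(1)] incl])
  show ?thesis unfolding SS_def mem_Collect_eq by (rule conjI[OF st ex])
qed

lemma scale_tri:
  assumes "is_lattice L" "is_lattice L'" "is_lattice L''"
  shows "scale L L'' \<le> scale L L' * scale L' L''"
proof -
  have a: "scale L L' > 0" using scale_pos assms by blast
  have b: "scale L' L'' > 0" using scale_pos assms by blast
  have "scale L L'' / scale L L' \<le> scale L' L''" unfolding scale_SS[of L' L'']
  proof (rule cInf_greatest)
    show "SS L' L'' \<noteq> {}" using SS_nonempty assms by blast
    fix t assume t: "t \<in> SS L' L''"
    have tp: "t > 0" using SS_pos[OF t] .
    have "scale L L'' / t \<le> scale L L'" unfolding scale_SS[of L L']
    proof (rule cInf_greatest)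
      show "SS L L' \<noteq> {}" using SS_nonempty assms by blast
      fix s assume s: "s \<in> SS L L'"
      have "scale L L'' \<le> s * t" unfolding scale_SS
        by (rule cInf_lower[OF SS_comp[OF s t] SS_bdd])
      then show "scale L L'' / t \<le> s" using tp by (simp add: divide_le_eq)
    qed
    then show "scale L L'' / scale L L' \<le> t" using a tp
      by (simp add: pos_divide_le_eq[OF tp] pos_divide_le_eq[OF a] ac_simps)
  qed
  then show ?thesis using a by (simp add: pos_divide_le_eq[OF a] ac_simps)
qed

lemma orth_inv:
  fixes R :: "real^'n^'n"
  assumes "orthogonal_matrix R"
  shows "R *v (transpose R *v x) = x" "transpose R *v (R *v x) = x"
  using assms unfolding orthogonal_matrix_def
  by (metis matrix_vector_mul_assoc matrix_vector_mul_lid)+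

lemma orth_inner:
  fixes R :: "real^'n^'n"
  assumes "orthogonal_matrix R"
  shows "(R *v a) \<bullet> (R *v b) = a \<bullet> b"
  using assms orthogonal_transformation_matrix[of "(*v) R"]
  unfolding orthogonal_transformation_def by simp

lemma ball_img:
  assumes "\<And>q. f q = 0 \<longleftrightarrow> q = 0"
  shows "(\<forall>q'\<in>f ` L - {0}. P q') \<longleftrightarrow> (\<forall>q\<in>L - {0}. P (f q))"
  using assms by blast

lemma vor_orth:
  fixes R :: "real^'n^'n"
  assumes R: "orthogonal_matrix R"
  shows "voronoi ((\<lambda>p. R *v p) ` L) = (\<lambda>p. R *v p) ` voronoi L"
proof -
  note inv = orth_inv[OF R]
  have key: "x \<in> voronoi ((\<lambda>p. R *v p) ` L) \<longleftrightarrow> transpose R *v x \<in> voronoi L" for x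
  proof -
    have e: "x \<bullet> (R *v q) = (transpose R *v x) \<bullet> q" for q
      using orth_inner[OF R, of "transpose R *v x" q] inv(1)[of x] by simp
    have z: "R *v q = 0 \<longleftrightarrow> q = 0" for q
      using inv(2)[of q] by (metis matrix_vector_mult_0_right)
    show ?thesis unfolding vor_iff ball_img[of "(*v) R", OF z]
      by (simp only: e orth_inner[OF R])
  qed
  show ?thesis
  proof (intro set_eqI iffI)
    fix x assume "x \<in> voronoi ((\<lambda>p. R *v p) ` L)"
    then have "transpose R *v x \<in> voronoi L" using key by blast
    moreover have "x = R *v (transpose R *v x)" using inv(1) by simp
    ultimately show "x \<in> (\<lambda>p. R *v p) ` voronoi L" by (rule rev_image_eqI)
  next
    fix x assume "x \<in> (\<lambda>p. R *v p) ` voronoi L"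
    then obtain p where "p \<in> voronoi L" "x = R *v p" by blast
    then show "x \<in> voronoi ((\<lambda>p. R *v p) ` L)" using key inv(2) by (simp del: transpose_matrix_vector)
  qed
qed

lemma vor_scale:
  fixes L :: "(real^'n) set"
  assumes c: "c > 0"
  shows "voronoi ((\<lambda>p. c *\<^sub>R p) ` L) = (\<lambda>p. c *\<^sub>R p) ` voronoi L"
proof -
  have key: "x \<in> voronoi ((\<lambda>p. c *\<^sub>R p) ` L) \<longleftrightarrow> (1/c) *\<^sub>R x \<in> voronoi L" for x
  proof -
    have e: "2 * (x \<bullet> (c *\<^sub>R q)) \<le> (c *\<^sub>R q) \<bullet> (c *\<^sub>R q) \<longleftrightarrow> 2 * (((1/c) *\<^sub>R x) \<bullet> q) \<le> q \<bullet> q" for q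
    proof -
      have "2 * (x \<bullet> (c *\<^sub>R q)) = c * c * (2 * (((1/c) *\<^sub>R x) \<bullet> q))" using c by simp
      moreover have "(c *\<^sub>R q) \<bullet> (c *\<^sub>R q) = c * c * (q \<bullet> q)" by simp
      moreover have "c * c > 0" using c by simp
      ultimately show ?thesis by (metis mult_le_cancel_left_pos)
    qed
    have z: "c *\<^sub>R q = 0 \<longleftrightarrow> q = 0" for q :: "real^'n" using c by simp
    show ?thesis unfolding vor_iff ball_img[of "\<lambda>p. c *\<^sub>R p", OF z] by (simp only: e)
  qed
  show ?thesis using in_scaled[of c] key c by (auto)
qed

lemma SS_scale:
  fixes L L' :: "(real^'n) set"
  assumes c: "c > 0"
  shows "SS ((\<lambda>p. c *\<^sub>R p) ` L) ((\<lambda>p. c *\<^sub>R p) ` L') = SS L L'"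
proof -
  have inj: "inj (\<lambda>p::real^'n. c *\<^sub>R p)" using c by (simp add: inj_on_def)
  have "(\<lambda>p. R *v p) ` (\<lambda>p. c *\<^sub>R p) ` V \<subseteq> (\<lambda>p. s *\<^sub>R p) ` (\<lambda>p. c *\<^sub>R p) ` V'
     \<longleftrightarrow> (\<lambda>p. R *v p) ` V \<subseteq> (\<lambda>p. s *\<^sub>R p) ` V'" for R :: "real^'n^'n" and s V V'
  proof -
    have 1: "(\<lambda>p. R *v p) ` (\<lambda>p. c *\<^sub>R p) ` V = (\<lambda>p. c *\<^sub>R p) ` (\<lambda>p. R *v p) ` V"
      by (simp add: image_image matrix_vector_mult_scaleR)
    have 2: "(\<lambda>p. s *\<^sub>R p) ` (\<lambda>p. c *\<^sub>R p) ` V' = (\<lambda>p. c *\<^sub>R p) ` (\<lambda>p. s *\<^sub>R p) ` V'"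
      by (simp add: image_image scaleR_scaleR mult.commute)
    show ?thesis unfolding 1 2 by (rule inj_image_subset_iff[OF inj])
  qed
  then show ?thesis unfolding SS_def vor_scale[OF c] by simp
qed

lemma ds_scale:
  fixes L L' :: "(real^'n) set"
  assumes c: "c > 0"
  shows "ds ((\<lambda>p. c *\<^sub>R p) ` L) ((\<lambda>p. c *\<^sub>R p) ` L') = ds L L'"
  unfolding ds_def scale_SS SS_scale[OF c] ..

lemma max_ge1:
  fixes a b :: real
  assumes "a > 0" "b > 0" "a * b \<ge> 1"
  shows "max a b \<ge> 1"
proof (rule ccontr)
  assume "\<not> max a b \<ge> 1"
  then have "a < 1" "b < 1" by auto
  then have "a * b < 1 * 1" using assms by (intro mult_strict_mono) auto
  then show False using assms by simp
qed

lemma max_scale_ge1: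
  assumes "is_lattice L" "is_lattice L'"
  shows "max (scale L L') (scale L' L) \<ge> 1"
  using max_ge1 scale_pos[OF assms] scale_pos[OF assms(2,1)] scale_prod_ge1[OF assms] by blast

lemma ds_nonneg:
  assumes "is_lattice L" "is_lattice L'"
  shows "ds L L' \<ge> 0"
  unfolding ds_def using max_scale_ge1[OF assms] by simp

lemma ds_sym: "ds L L' = ds L' L"
  unfolding ds_def by (simp add: max.commute)

lemma ds_tri:
  assumes "is_lattice L" "is_lattice L'" "is_lattice L''"
  shows "ds L L'' \<le> ds L L' + ds L' L''"
proof -
  define M1 where "M1 = max (scale L L') (scale L' L)"
  define M2 where "M2 = max (scale L' L'') (scale L'' L')"
  have p1: "scale L L' > 0" "scale L' L > 0" using scale_pos assms by blast+
  have p2: "scale L' L'' > 0" "scale L'' L' > 0" using scale_pos assms by blast+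
  have p3: "scale L L'' > 0" "scale L'' L > 0" using scale_pos assms by blast+
  have M1: "M1 > 0" unfolding M1_def using p1 by simp
  have M2: "M2 > 0" unfolding M2_def using p2 by simp
  have "scale L L'' \<le> scale L L' * scale L' L''" using scale_tri assms by blast
  also have "\<dots> \<le> M1 * M2" unfolding M1_def M2_def using p1 p2
    by (intro mult_mono) auto
  finally have a: "scale L L'' \<le> M1 * M2" .
  have "scale L'' L \<le> scale L'' L' * scale L' L" using scale_tri assms by blast
  also have "\<dots> \<le> M2 * M1" unfolding M1_def M2_def using p1 p2
    by (intro mult_mono) auto
  finally have b: "scale L'' L \<le> M1 * M2" by (simp add: mult.commute)
  have "max (scale L L'') (scale L'' L) \<le> M1 * M2" using a b by simp
  then have "ln (max (scale L L'') (scale L'' L)) \<le> ln (M1 * M2)"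
    using p3 by (subst ln_le_cancel_iff) auto
  also have "\<dots> = ln M1 + ln M2" using M1 M2 by (simp add: ln_mult)
  finally show ?thesis unfolding ds_def M1_def M2_def .
qed

lemma image_one: "(\<lambda>p. (1::real) *\<^sub>R p) ` X = (X :: 'a::real_vector set)" by simp

lemma equiv_ds0:
  assumes "is_lattice L" "is_lattice L'" "rotation R" "(\<lambda>p. R *v p) ` L = L'"
  shows "ds L L' = 0"
proof -
  have o: "orthogonal_matrix R" using assms(3) unfolding rotation_def by simp
  have V': "voronoi L' = (\<lambda>p. R *v p) ` voronoi L" using vor_orth[OF o, of L] unfolding assms(4) .
  have "1 \<in> SS L L'" unfolding SS_def mem_Collect_eq image_one V' using assms(3) by (intro conjI exI[of _ R]) auto
  then have a: "scale L L' \<le> 1" unfolding scale_SS by (rule cInf_lower[OF _ SS_bdd])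
  have "(\<lambda>p. transpose R *v p) ` voronoi L' = voronoi L"
    unfolding V' image_image orth_inv(2)[OF o] by simp
  then have "1 \<in> SS L' L" unfolding SS_def mem_Collect_eq image_one using rot_transpose[OF assms(3)] by (intro conjI exI[of _ "transpose R"]) auto
  then have b: "scale L' L \<le> 1" unfolding scale_SS by (rule cInf_lower[OF _ SS_bdd])
  have "max (scale L L') (scale L' L) = 1" using a b max_scale_ge1[OF assms(1,2)] by simp
  then show ?thesis unfolding ds_def by simp
qed

lemma rot_norm_bound:
  fixes R :: "real^'n^'n"
  assumes "rotation R"
  shows "norm R \<le> real CARD('n)"
proof -
  have o: "orthogonal_matrix R" using assms unfolding rotation_def by simp
  have r: "norm (R $ i) = 1" for i
  proof -
    have "row i R = R $ i" by (simp add: row_def vec_eq_iff)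
    then show ?thesis using o orthogonal_matrix_orthonormal_rows by metis
  qed
  have "norm R = L2_set (\<lambda>i. norm (R $ i)) UNIV" by (simp add: norm_vec_def)
  also have "\<dots> \<le> (\<Sum>i\<in>UNIV. norm (R $ i))" by (rule L2_set_le_sum) simp
  also have "\<dots> = real CARD('n)" using r by simp
  finally show ?thesis .
qed

lemma rot_set_closed: "closed {R::real^'n^'n. rotation R}"
proof -
  have eq: "{R::real^'n^'n. rotation R} =
     {R. \<forall>i j. (\<Sum>k\<in>UNIV. R$k$i * R$k$j) = (if i = j then 1 else 0)} \<inter>
     {R. (\<Sum>p\<in>{p. p permutes (UNIV::'n set)}. of_int (sign p) * (\<Prod>i\<in>UNIV. R$i$p i)) = 1}"
    unfolding rotation_def orthogonal_matrix det_def
    by (auto simp: vec_eq_iff matrix_matrix_mult_def transpose_def mat_def)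
  show ?thesis unfolding eq
    by (intro closed_Int closed_Collect_all closed_Collect_eq continuous_intros)
qed

lemma rot_set_compact: "compact {R::real^'n^'n. rotation R}"
  unfolding compact_eq_bounded_closed
proof
  show "bounded {R::real^'n^'n. rotation R}"
    unfolding bounded_iff using rot_norm_bound by blast
qed (rule rot_set_closed)

lemma tendsto_mv:
  fixes X :: "nat \<Rightarrow> real^'n^'m"
  assumes "X \<longlonglongrightarrow> l"
  shows "(\<lambda>k. X k *v p) \<longlonglongrightarrow> l *v p"
  unfolding matrix_vector_mult_def
  by (intro tendsto_intros assms)

lemma scale_attained:
  fixes L L' :: "(real^'n) set"
  assumes "is_lattice L" "is_lattice L'"
  shows "scale L L' \<in> SS L L'"
proof -
  define a where "a = scale L L'"
  have a: "a > 0" unfolding a_def using scale_pos assms by blast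
  have ne: "SS L L' \<noteq> {}" using SS_nonempty assms by blast
  have "\<forall>k. \<exists>s. s \<in> SS L L' \<and> s < a + 1 / Suc k"
  proof
    fix k :: nat
    have "Inf (SS L L') < a + 1 / Suc k" unfolding a_def scale_SS by simp
    then show "\<exists>s. s \<in> SS L L' \<and> s < a + 1 / Suc k" using cInf_lessD[OF ne] by blast
  qed
  then obtain s where s: "\<And>k. s k \<in> SS L L'" "\<And>k. s k < a + 1 / Suc k" by metis
  have sa: "a \<le> s k" for k unfolding a_def scale_SS by (rule cInf_lower[OF s(1) SS_bdd])
  have "\<forall>k. \<exists>R. rotation R \<and> (\<lambda>p. R *v p) ` voronoi L \<subseteq> (\<lambda>p. s k *\<^sub>R p) ` voronoi L'"
    using s(1) unfolding SS_def by blast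
  then obtain R where R: "\<And>k. rotation (R k)"
    "\<And>k. (\<lambda>p. R k *v p) ` voronoi L \<subseteq> (\<lambda>p. s k *\<^sub>R p) ` voronoi L'" by metis
  obtain l r where l: "rotation l" "strict_mono r" "(R \<circ> r) \<longlonglongrightarrow> l"
    using rot_set_compact R(1) unfolding compact_def by (metis mem_Collect_eq)
  have "s \<longlonglongrightarrow> a"
  proof (rule tendsto_sandwich[of "\<lambda>_. a" _ _ "\<lambda>k. a + 1 / Suc k"])
    show "\<forall>\<^sub>F n in sequentially. a \<le> s n" using sa by simp
    show "\<forall>\<^sub>F n in sequentially. s n \<le> a + 1 / Suc n" by (intro always_eventually allI less_imp_le s(2))
    show "(\<lambda>k. a + 1 / Suc k) \<longlonglongrightarrow> a"
      using tendsto_add[OF tendsto_const LIMSEQ_inverse_real_of_nat, of a] by (simp add: inverse_eq_divide)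
  qed simp
  then have sr: "(s \<circ> r) \<longlonglongrightarrow> a" using l(2) by (rule LIMSEQ_subseq_LIMSEQ)
  have "(\<lambda>p. l *v p) ` voronoi L \<subseteq> (\<lambda>p. a *\<^sub>R p) ` voronoi L'"
  proof
    fix x assume "x \<in> (\<lambda>p. l *v p) ` voronoi L"
    then obtain p where p: "p \<in> voronoi L" "x = l *v p" by blast
    have mem: "(1 / s (r k)) *\<^sub>R (R (r k) *v p) \<in> voronoi L'" for k
    proof -
      have "R (r k) *v p \<in> (\<lambda>p. s (r k) *\<^sub>R p) ` voronoi L'" using R(2) p(1) by blast
      then show ?thesis using in_scaled[of "s (r k)"] SS_pos[OF s(1)] by (metis less_irrefl)
    qed
    have "(\<lambda>k. (1 / s (r k)) *\<^sub>R (R (r k) *v p)) \<longlonglongrightarrow> (1 / a) *\<^sub>R (l *v p)"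
    proof (intro tendsto_scaleR tendsto_divide tendsto_const)
      show "(\<lambda>k. s (r k)) \<longlonglongrightarrow> a" using sr by (simp add: comp_def)
      show "(\<lambda>k. R (r k) *v p) \<longlonglongrightarrow> l *v p" using tendsto_mv[OF l(3)] by (simp add: comp_def)
    qed (use a in simp)
    then have "(1 / a) *\<^sub>R (l *v p) \<in> voronoi L'"
      by (rule closed_sequentially[OF vor_closed mem])
    then show "x \<in> (\<lambda>p. a *\<^sub>R p) ` voronoi L'" using in_scaled[of a "l *v p" "voronoi L'"] a p(2) by simp
  qed
  then show ?thesis unfolding SS_def a_def[symmetric] using a l(1) by blast
qed

lemma isometry_onto:
  fixes f :: "'a::metric_space \<Rightarrow> 'a"
  assumes K: "compact K" and fK: "f ` K \<subseteq> K" and iso: "\<And>x y. dist (f x) (f y) = dist x y"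
  shows "f ` K = K"
proof (rule ccontr)
  assume "f ` K \<noteq> K"
  then obtain p where p: "p \<in> K" "p \<notin> f ` K" using fK by blast
  have cont: "continuous_on K f"
    unfolding continuous_on_iff
  proof (intro ballI allI impI)
    fix x e assume "(e::real) > 0"
    then show "\<exists>d>0. \<forall>x'\<in>K. dist x' x < d \<longrightarrow> dist (f x') (f x) < e"
      by (intro exI[of _ e]) (simp add: iso)
  qed
  have cl: "closed (f ` K)" using compact_continuous_image[OF cont K] compact_imp_closed by blast
  have ne: "f ` K \<noteq> {}" using p by blast
  define d where "d = infdist p (f ` K)"
  have d: "d > 0" unfolding d_def using in_closed_iff_infdist_zero[OF cl ne] p(2) infdist_nonneg
    by (metis less_eq_real_def)
  define x where "x k = (f ^^ k) p" for k
  have xK: "x k \<in> K" for k unfolding x_def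
    by (induction k) (use p fK in auto)
  have isoit: "dist ((f ^^ i) a) ((f ^^ i) b) = dist a b" for i a b
    by (induction i) (auto simp: iso)
  have far: "dist (x j) (x i) \<ge> d" if "i < j" for i j
  proof -
    obtain m where m: "j = i + Suc m" using less_imp_Suc_add[OF \<open>i < j\<close>] by auto
    have "x j = (f ^^ i) ((f ^^ Suc m) p)" unfolding x_def m by (simp only: funpow_add o_apply)
    then have "dist (x j) (x i) = dist ((f ^^ Suc m) p) p" unfolding x_def by (simp add: isoit)
    moreover have "(f ^^ Suc m) p \<in> f ` K" using xK[of m] unfolding x_def by simp
    then have "infdist p (f ` K) \<le> dist p ((f ^^ Suc m) p)" by (rule infdist_le)
    ultimately show ?thesis unfolding d_def by (simp add: dist_commute)
  qed
  obtain l r where lr: "strict_mono r" "(x \<circ> r) \<longlonglongrightarrow> l"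
    using K xK unfolding compact_def by blast
  have "Cauchy (x \<circ> r)" using lr(2) by (rule LIMSEQ_imp_Cauchy)
  then obtain M where M: "\<forall>m\<ge>M. \<forall>n\<ge>M. dist ((x \<circ> r) m) ((x \<circ> r) n) < d"
    using d unfolding Cauchy_def by blast
  have "dist (x (r (Suc M))) (x (r M)) < d" using M by simp
  moreover have "r M < r (Suc M)" using lr(1) by (simp add: strict_mono_def)
  ultimately show False using far by force
qed

lemma local_ok:
  fixes B :: "real^'n^'n"
  assumes Kb: "\<And>x. norm x \<le> K * norm (B *v x)" and K: "K > 0"
  assumes strict: "\<forall>m\<in>lattice_gen B - {0} - E. 2 * (x \<bullet> m) < m \<bullet> m"
  shows "\<exists>d>0. \<forall>w. norm w < d \<longrightarrow> (\<forall>m\<in>lattice_gen B - {0} - E. 2 * ((x + w) \<bullet> m) \<le> m \<bullet> m)"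
proof -
  define F where "F = {m \<in> lattice_gen B. norm m \<le> 2 * norm x + 1} - {0} - E"
  have fin: "finite F" unfolding F_def using lat_finite[OF Kb K] by (rule finite_subset[rotated]) auto
  define g where "g m = (m \<bullet> m - 2 * (x \<bullet> m)) / (2 * norm m)" for m
  have gpos: "g m > 0" if "m \<in> F" for m
    using that strict unfolding F_def g_def by (auto intro!: divide_pos_pos)
  define d where "d = Min (insert (1/2) (g ` F))"
  have d: "d > 0" unfolding d_def using fin gpos by auto
  have dle1: "d \<le> 1/2" unfolding d_def using fin by (intro Min_le) auto
  have dle2: "d \<le> g m" if "m \<in> F" for m unfolding d_def using fin that by (intro Min_le) auto
  note dle = dle1 dle2
  have "\<forall>w. norm w < d \<longrightarrow> (\<forall>m\<in>lattice_gen B - {0} - E. 2 * ((x + w) \<bullet> m) \<le> m \<bullet> m)"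
  proof (intro allI impI ballI)
    fix w :: "real^'n" and m assume w: "norm w < d" and m: "m \<in> lattice_gen B - {0} - E"
    have nm: "norm m > 0" using m by simp
    have cs: "w \<bullet> m \<le> norm w * norm m" by (rule norm_cauchy_schwarz)
    have cs2: "x \<bullet> m \<le> norm x * norm m" by (rule norm_cauchy_schwarz)
    have mm: "m \<bullet> m = norm m * norm m" by (simp add: dot_square_norm power2_eq_square)
    have e: "2 * ((x + w) \<bullet> m) = 2 * (x \<bullet> m) + 2 * (w \<bullet> m)" by (simp add: inner_add_left)
    show "2 * ((x + w) \<bullet> m) \<le> m \<bullet> m"
    proof (cases "m \<in> F")
      case True
      then have "norm w < g m" using w dle(2) by fastforce
      then have "norm w * (2 * norm m) < m \<bullet> m - 2 * (x \<bullet> m)"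
        unfolding g_def using nm by (simp add: pos_less_divide_eq)
      then show ?thesis using e cs by linarith
    next
      case False
      then have big: "norm m > 2 * norm x + 1" using m unfolding F_def by auto
      have "norm w * norm m \<le> (1/2) * norm m" using w dle(1) nm by (intro mult_right_mono) auto
      moreover have "(2 * norm x + 1) * norm m \<le> norm m * norm m"
        using big nm by (intro mult_right_mono) auto
      ultimately show ?thesis using e cs cs2 mm by (simp add: algebra_simps)
    qed
  qed
  then show ?thesis using d by blast
qed

lemma relevant_in:
  fixes B1 B2 :: "real^'n^'n"
  assumes K1: "\<And>x. norm x \<le> K1 * norm (B1 *v x)" "K1 > 0"
  assumes K2: "\<And>x. norm x \<le> K2 * norm (B2 *v x)" "K2 > 0"
  assumes V: "voronoi (lattice_gen B1) = voronoi (lattice_gen B2)"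
  assumes q: "q \<in> lattice_gen B1" "q \<noteq> 0"
    and sr: "\<forall>m\<in>lattice_gen B1 - {0} - {q}. q \<bullet> m < m \<bullet> m"
  shows "q \<in> lattice_gen B2"
proof -
  define x where "x = (1/2) *\<^sub>R q"
  have x2: "2 * (x \<bullet> m) = q \<bullet> m" for m unfolding x_def by simp
  have qq: "q \<bullet> q > 0" using q(2) by simp
  obtain d1 where d1: "d1 > 0"
    "\<And>w. norm w < d1 \<Longrightarrow> \<forall>m\<in>lattice_gen B1 - {0} - {q}. 2 * ((x + w) \<bullet> m) \<le> m \<bullet> m"
    using local_ok[OF K1, of "{q}" x] sr x2 by auto
  have inV1: "x + w \<in> voronoi (lattice_gen B1)" if "norm w < d1" "w \<bullet> q \<le> 0" for w
    unfolding vor_iff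
  proof
    fix m assume m: "m \<in> lattice_gen B1 - {0}"
    show "2 * ((x + w) \<bullet> m) \<le> m \<bullet> m"
    proof (cases "m = q")
      case True
      have "2 * ((x + w) \<bullet> q) = q \<bullet> q + 2 * (w \<bullet> q)" by (simp add: inner_add_left x2)
      then show ?thesis using True that(2) by simp
    next
      case False then show ?thesis using d1(2)[OF that(1)] m by blast
    qed
  qed
  have xV: "x \<in> voronoi (lattice_gen B2)" using inV1[of 0] d1(1) V by simp
  have "\<exists>l\<in>lattice_gen B2 - {0}. 2 * (x \<bullet> l) = l \<bullet> l"
  proof (rule ccontr)
    assume "\<not> ?thesis"
    then have "\<forall>l\<in>lattice_gen B2 - {0} - {}. 2 * (x \<bullet> l) < l \<bullet> l"
      using xV unfolding vor_iff by force
    then obtain d2 where d2: "d2 > 0"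
      "\<And>w. norm w < d2 \<Longrightarrow> \<forall>m\<in>lattice_gen B2 - {0} - {}. 2 * ((x + w) \<bullet> m) \<le> m \<bullet> m"
      using local_ok[OF K2, of "{}" x] by auto
    define t where "t = d2 / (2 * norm q)"
    have t: "t > 0" unfolding t_def using d2(1) q(2) by simp
    have "norm (t *\<^sub>R q) = d2 / 2" unfolding t_def using q(2) d2(1) by simp
    then have "x + t *\<^sub>R q \<in> voronoi (lattice_gen B2)" unfolding vor_iff using d2 by simp
    then have "x + t *\<^sub>R q \<in> voronoi (lattice_gen B1)" using V by simp
    then have "2 * ((x + t *\<^sub>R q) \<bullet> q) \<le> q \<bullet> q" using q unfolding vor_iff by blast
    moreover have "2 * ((x + t *\<^sub>R q) \<bullet> q) = q \<bullet> q + 2 * t * (q \<bullet> q)"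
      by (simp add: inner_add_left x2)
    ultimately show False using t qq by (smt (verit) mult_pos_pos)
  qed
  then obtain l where l: "l \<in> lattice_gen B2" "l \<noteq> 0" "q \<bullet> l = l \<bullet> l" using x2 by auto
  have wl: "w \<bullet> l \<le> 0" if "norm w < d1" "w \<bullet> q \<le> 0" for w
  proof -
    have "x + w \<in> voronoi (lattice_gen B2)" using inV1[OF that] V by simp
    then have "2 * ((x + w) \<bullet> l) \<le> l \<bullet> l" using l unfolding vor_iff by blast
    then show ?thesis using l(3) by (simp add: inner_add_left x2)
  qed
  define c where "c = (l \<bullet> q) / (q \<bullet> q)"
  define u where "u = l - c *\<^sub>R q"
  have uq: "u \<bullet> q = 0" unfolding u_def c_def using qq by (simp add: inner_diff_left)
  have ul: "u \<bullet> l = 0"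
  proof (cases "u = 0")
    case True then show ?thesis by simp
  next
    case False
    define t where "t = d1 / (2 * norm u)"
    have t: "t > 0" unfolding t_def using d1(1) False by simp
    have n1: "norm (t *\<^sub>R u) < d1" "norm (- (t *\<^sub>R u)) < d1" unfolding t_def using False d1(1) by simp_all
    have "(t *\<^sub>R u) \<bullet> l \<le> 0" using wl[OF n1(1)] uq by simp
    moreover have "(- (t *\<^sub>R u)) \<bullet> l \<le> 0" using wl[OF n1(2)] uq by simp
    ultimately have "t * (u \<bullet> l) = 0" by simp
    then show ?thesis using t by simp
  qed
  have "u \<bullet> u = u \<bullet> l - c * (u \<bullet> q)" unfolding u_def by (simp add: inner_diff_right)
  then have "u = 0" using ul uq by simp
  then have lc: "l = c *\<^sub>R q" unfolding u_def by simp
  have e1: "q \<bullet> l = c * (q \<bullet> q)" unfolding lc by simp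
  have e2: "l \<bullet> l = c * c * (q \<bullet> q)" unfolding lc by simp
  have "c * (q \<bullet> q) = (c * c) * (q \<bullet> q)" using l(3) e1 e2 by simp
  then have "c = c * c" using qq by simp
  then have "c = 0 \<or> c = 1" by (metis mult_cancel_right1 mult_eq_0_iff)
  then have "l = q" using lc l(2) by auto
  then show ?thesis using l(1) by simp
qed

lemma lat_sub:
  fixes B1 B2 :: "real^'n^'n"
  assumes K1: "\<And>x. norm x \<le> K1 * norm (B1 *v x)" "K1 > 0"
  assumes K2: "\<And>x. norm x \<le> K2 * norm (B2 *v x)" "K2 > 0"
  assumes V: "voronoi (lattice_gen B1) = voronoi (lattice_gen B2)"
  shows "lattice_gen B1 \<subseteq> lattice_gen B2"
proof -
  define L1 where "L1 = lattice_gen B1"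
  define f where "f l = card {m \<in> L1. norm m < norm l}" for l :: "real^'n"
  have dec: "f y < f l" if "y \<in> L1" "norm y < norm l" for y l
  proof -
    have "finite {m \<in> L1. norm m < norm l}"
      using lat_finite[OF K1, of "norm l"] unfolding L1_def by (rule finite_subset[rotated]) auto
    moreover have "{m \<in> L1. norm m < norm y} \<subset> {m \<in> L1. norm m < norm l}"
      using that by auto
    ultimately show ?thesis unfolding f_def by (rule psubset_card_mono)
  qed
  have "l \<in> L1 \<longrightarrow> l \<in> lattice_gen B2" for l
  proof (induction l rule: measure_induct_rule[of f])
    case (less l)
    show ?case
    proof
      assume l: "l \<in> L1"
      show "l \<in> lattice_gen B2"
      proof (cases "l = 0")
        case True then show ?thesis by (simp add: lat_0)
      next
        case l0: False
        show ?thesis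
        proof (cases "\<forall>m\<in>L1 - {0} - {l}. l \<bullet> m < m \<bullet> m")
          case True
          then show ?thesis using relevant_in[OF K1 K2 V, of l] l l0 unfolding L1_def by blast
        next
          case False
          then obtain m where m: "m \<in> L1" "m \<noteq> 0" "m \<noteq> l" "m \<bullet> m \<le> l \<bullet> m" by (auto simp: not_less)
          have lm: "(l - m) \<bullet> (l - m) = l \<bullet> l - 2 * (l \<bullet> m) + m \<bullet> m"
            by (simp add: inner_diff_left inner_diff_right inner_commute)
          have mpos: "m \<bullet> m > 0" using m(2) by simp
          have n1: "norm (l - m) < norm l" unfolding norm_lt using lm m(4) mpos by linarith
          have n2: "norm m < norm l"
          proof (rule ccontr)
            assume "\<not> norm m < norm l"
            then have "l \<bullet> l \<le> m \<bullet> m" unfolding norm_lt by simp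
            then have "(l - m) \<bullet> (l - m) \<le> 0" using lm m(4) by linarith
            then have "l - m = 0" using inner_ge_zero[of "l - m"] inner_eq_zero_iff[of "l - m"] by linarith
            then show False using m(3) by simp
          qed
          have lmL: "l - m \<in> L1" using l m(1) unfolding L1_def by (rule lat_diff)
          have "m \<in> lattice_gen B2" using less dec[OF m(1) n2] m(1) by blast
          moreover have "l - m \<in> lattice_gen B2" using less dec[OF lmL n1] lmL by blast
          ultimately have "m + (l - m) \<in> lattice_gen B2" by (rule lat_add)
          then show ?thesis by simp
        qed
      qed
    qed
  qed
  then show ?thesis unfolding L1_def by blast
qed

lemma orth_invertible:
  fixes R :: "real^'n^'n"
  assumes "orthogonal_matrix R" shows "invertible R"
  using assms unfolding orthogonal_matrix_def invertible_def by blast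

lemma rot_lattice:
  fixes R B :: "real^'n^'n"
  shows "(\<lambda>p. R *v p) ` lattice_gen B = lattice_gen (R ** B)"
proof (intro set_eqI iffI)
  fix y assume "y \<in> (\<lambda>p. R *v p) ` lattice_gen B"
  then obtain p where "p \<in> lattice_gen B" "y = R *v p" by blast
  moreover obtain x where "zvec x" "p = B *v x" using lat_mem calculation(1) by blast
  ultimately have "y = (R ** B) *v x" by (simp add: matrix_vector_mul_assoc)
  then show "y \<in> lattice_gen (R ** B)" using lat_mem \<open>zvec x\<close> by blast
next
  fix y assume "y \<in> lattice_gen (R ** B)"
  then obtain x where x: "zvec x" "y = (R ** B) *v x" using lat_mem by blast
  then have "B *v x \<in> lattice_gen B" using lat_mem by blast
  moreover have "y = R *v (B *v x)" using x by (simp add: matrix_vector_mul_assoc)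
  ultimately show "y \<in> (\<lambda>p. R *v p) ` lattice_gen B" by blast
qed

lemma vor_compact:
  assumes "is_lattice L"
  shows "compact (voronoi L)"
proof -
  obtain C where C: "C > 0" "\<And>p. p \<in> voronoi L \<Longrightarrow> norm p \<le> C" using vor_bdd assms by blast
  have "bounded (voronoi L)" unfolding bounded_iff using C by blast
  then show ?thesis using vor_closed compact_eq_bounded_closed by blast
qed

lemma ds0_equiv:
  fixes L L' :: "(real^'n) set"
  assumes LL: "is_lattice L" "is_lattice L'" and d0: "ds L L' = 0"
  shows "\<exists>R. rotation R \<and> (\<lambda>p. R *v p) ` L = L'"
proof -
  have a: "scale L L' > 0" "scale L' L > 0" using scale_pos LL by blast+
  have "max (scale L L') (scale L' L) = 1" using d0 a unfolding ds_def by simp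
  then have le: "scale L L' \<le> 1" "scale L' L \<le> 1" by auto
  have p1: "scale L L' * scale L' L \<ge> 1" using scale_prod_ge1 LL by blast
  have e1: "scale L L' = 1"
  proof (rule ccontr)
    assume "scale L L' \<noteq> 1"
    then have "scale L L' < 1" using le by simp
    then have "scale L L' * scale L' L < 1 * scale L' L" using a by (intro mult_strict_right_mono) auto
    then show False using p1 le by simp
  qed
  have e2: "scale L' L = 1" using e1 p1 le by simp
  have s1: "1 \<in> SS L L'" using scale_attained[OF LL] e1 by simp
  have s2: "1 \<in> SS L' L" using scale_attained[OF LL(2,1)] e2 by simp
  obtain R where R: "rotation R" "(\<lambda>p. R *v p) ` voronoi L \<subseteq> voronoi L'"
    using s1 unfolding SS_def mem_Collect_eq image_one by blast
  obtain R' where R': "rotation R'" "(\<lambda>p. R' *v p) ` voronoi L' \<subseteq> voronoi L"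
    using s2 unfolding SS_def mem_Collect_eq image_one by blast
  have oR: "orthogonal_matrix R" "orthogonal_matrix R'" using R R' unfolding rotation_def by auto
  define T where "T = R' ** R"
  have oT: "orthogonal_matrix T" unfolding T_def using oR by (simp add: orthogonal_matrix_mul)
  have TV: "(\<lambda>p. T *v p) ` voronoi L \<subseteq> voronoi L"
    using R(2) R'(2) unfolding T_def by (auto simp: matrix_vector_mul_assoc[symmetric])
  have iso: "dist (T *v x) (T *v y) = dist x y" for x y
    using orth_norm[OF oT, of "x - y"] by (simp add: dist_norm matrix_vector_mult_diff_distrib)
  have TVe: "(\<lambda>p. T *v p) ` voronoi L = voronoi L"
    by (rule isometry_onto[OF vor_compact[OF LL(1)] TV iso])
  have RV: "(\<lambda>p. R *v p) ` voronoi L = voronoi L'"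
  proof
    show "(\<lambda>p. R *v p) ` voronoi L \<subseteq> voronoi L'" by (rule R(2))
    show "voronoi L' \<subseteq> (\<lambda>p. R *v p) ` voronoi L"
    proof
      fix y assume y: "y \<in> voronoi L'"
      then have "R' *v y \<in> voronoi L" using R'(2) by blast
      then obtain v where v: "v \<in> voronoi L" "R' *v y = T *v v" using TVe by blast
      then have "R' *v y = R' *v (R *v v)" unfolding T_def by (simp add: matrix_vector_mul_assoc)
      then have "y = R *v v" using orth_inv(2)[OF oR(2)] by metis
      then show "y \<in> (\<lambda>p. R *v p) ` voronoi L" using v(1) by blast
    qed
  qed
  obtain B K where B: "invertible B" "L = lattice_gen B" "K > 0" "\<And>x. norm x \<le> K * norm (B *v x)"
    using lattice_props LL(1) by blast
  obtain B' K' where B': "invertible B'" "L' = lattice_gen B'" "K' > 0" "\<And>x. norm x \<le> K' * norm (B' *v x)"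
    using lattice_props LL(2) by blast
  have invRB: "invertible (R ** B)" using invertible_mult orth_invertible[OF oR(1)] B(1) by blast
  obtain K2 where K2: "K2 > 0" "\<And>x. norm x \<le> K2 * norm ((R ** B) *v x)" using inv_bound[OF invRB] by blast
  have RL: "(\<lambda>p. R *v p) ` L = lattice_gen (R ** B)" unfolding B(2) by (rule rot_lattice)
  have VV: "voronoi (lattice_gen (R ** B)) = voronoi (lattice_gen B')"
    using vor_orth[OF oR(1), of L] RV unfolding RL B'(2) by simp
  have "lattice_gen (R ** B) = lattice_gen B'"
    using lat_sub[OF K2(2,1) B'(4,3) VV] lat_sub[OF B'(4,3) K2(2,1) VV[symmetric]] by blast
  then show ?thesis using R(1) RL B'(2) by auto
qed

lemma core_ineq:
  fixes p a b x :: "real^'n"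
  assumes pb: "2 * (p \<bullet> b) \<le> b \<bullet> b" and pC: "norm p \<le> C"
    and ab: "norm (a - b) \<le> eta * norm x" and xa: "norm x \<le> K * norm a" and x1: "norm x \<ge> 1"
    and eK: "eta * K \<le> 1" and eps: "eta * (3 * K + 2 * C * K * K) \<le> eps"
    and pos: "eta \<ge> 0" "K \<ge> 0" "C \<ge> 0"
  shows "2 * (p \<bullet> a) \<le> (1 + eps) * (a \<bullet> a)"
proof -
  define na where "na = norm a"
  have na: "na \<ge> 0" unfolding na_def by simp
  have aa: "a \<bullet> a = na * na" unfolding na_def by (simp add: dot_square_norm power2_eq_square)
  have bb: "b \<bullet> b = norm b * norm b" by (simp add: dot_square_norm power2_eq_square)
  have "2 * (p \<bullet> a) = 2 * (p \<bullet> b) + 2 * (p \<bullet> (a - b))" by (simp add: inner_diff_right)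
  also have "\<dots> \<le> b \<bullet> b + 2 * (norm p * norm (a - b))"
    using pb norm_cauchy_schwarz[of p "a - b"] by linarith
  also have "norm p * norm (a - b) \<le> C * (eta * norm x)"
    using pC ab pos by (intro mult_mono) auto
  finally have s1: "2 * (p \<bullet> a) \<le> norm b * norm b + 2 * C * eta * norm x" using bb by simp
  have "norm b \<le> norm a + norm (a - b)" by (metis norm_minus_commute norm_triangle_sub add.commute)
  also have "\<dots> \<le> na + eta * (K * na)" unfolding na_def using ab xa pos
    by (smt (verit) mult_left_mono)
  finally have nb: "norm b \<le> (1 + eta * K) * na" by (simp add: algebra_simps)
  have "norm b * norm b \<le> ((1 + eta * K) * na) * ((1 + eta * K) * na)"
    using nb pos na by (intro mult_mono) auto
  also have "\<dots> = (1 + eta * K) * (1 + eta * K) * (na * na)" by (simp add: algebra_simps)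
  also have "\<dots> \<le> (1 + 3 * (eta * K)) * (na * na)"
  proof (rule mult_right_mono)
    have "eta * K \<ge> 0" using pos by simp
    then have "(eta * K) * (eta * K) \<le> 1 * (eta * K)" using eK by (intro mult_right_mono) auto
    then show "(1 + eta * K) * (1 + eta * K) \<le> 1 + 3 * (eta * K)" by (simp add: algebra_simps)
  qed simp
  finally have s2: "norm b * norm b \<le> (1 + 3 * (eta * K)) * (na * na)" .
  have "norm x \<le> norm x * norm x" using x1 by (simp add: mult_le_cancel_left1 less_le_trans)
  also have "\<dots> \<le> (K * na) * (K * na)" using xa x1 unfolding na_def by (intro mult_mono) auto
  finally have s3: "norm x \<le> K * K * (na * na)" by (simp add: algebra_simps)
  have "2 * C * eta * norm x \<le> 2 * C * eta * (K * K * (na * na))"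
    using s3 pos by (intro mult_left_mono) auto
  with s1 s2 have "2 * (p \<bullet> a) \<le> (1 + eta * (3 * K + 2 * C * K * K)) * (na * na)"
    by (simp add: algebra_simps)
  also have "\<dots> \<le> (1 + eps) * (na * na)" using eps by (intro mult_right_mono) auto
  finally show ?thesis using aa by simp
qed

lemma scaled_in_vor:
  fixes p :: "real^'n"
  assumes "eps > 0" "\<And>q. q \<in> L - {0} \<Longrightarrow> 2 * (p \<bullet> q) \<le> (1 + eps) * (q \<bullet> q)"
  shows "(1 / (1 + eps)) *\<^sub>R p \<in> voronoi L"
  unfolding vor_iff
proof
  fix q assume q: "q \<in> L - {0}"
  have "2 * (((1 / (1 + eps)) *\<^sub>R p) \<bullet> q) = (2 * (p \<bullet> q)) / (1 + eps)" by simp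
  also have "\<dots> \<le> q \<bullet> q" using assms(2)[OF q] assms(1) by (simp add: pos_divide_le_eq mult.commute)
  finally show "2 * (((1 / (1 + eps)) *\<^sub>R p) \<bullet> q) \<le> q \<bullet> q" .
qed

lemma vor_lat_ineq:
  assumes "p \<in> voronoi (lattice_gen B)" "zvec x"
  shows "2 * (p \<bullet> (B *v x)) \<le> (B *v x) \<bullet> (B *v x)"
proof (cases "B *v x = 0")
  case True then show ?thesis by simp
next
  case False
  have "B *v x \<in> lattice_gen B" using assms(2) lat_mem by blast
  then show ?thesis using False assms(1) unfolding vor_iff by blast
qed

lemma vor_perturb:
  fixes B :: "real^'n^'n"
  assumes B: "invertible B" and eps: "eps > 0"
  obtains d where "d > 0" "\<And>B1. invertible B1 \<Longrightarrow> norm (B1 - B) < d \<Longrightarrow>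
      (\<forall>p \<in> voronoi (lattice_gen B1). (1 / (1 + eps)) *\<^sub>R p \<in> voronoi (lattice_gen B)) \<and>
      (\<forall>p \<in> voronoi (lattice_gen B). (1 / (1 + eps)) *\<^sub>R p \<in> voronoi (lattice_gen B1))"
proof -
  define c where "c = real CARD('n) * real CARD('n)"
  have "0 < CARD('n)" by simp
  then have h: "real CARD('n) \<ge> 1" by linarith
  have c1: "c \<ge> 1" unfolding c_def using mult_mono[OF h h] by simp
  obtain K where K: "K > 0" "\<And>x. norm x \<le> K * norm (B *v x)" using inv_bound[OF B] by blast
  define K' where "K' = 2 * K"
  have K': "K' > 0" unfolding K'_def using K by simp
  define C where "C = c * (norm B + 1) * real CARD('n)"
  have C: "C \<ge> 0" unfolding C_def c_def by simp
  define e0 where "e0 = min (1 / K') (eps / (3 * K' + 2 * C * K' * K'))"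
  have den: "3 * K' + 2 * C * K' * K' > 0" using K' C by (simp add: add_pos_nonneg)
  have e0: "e0 > 0" unfolding e0_def using K' eps den by simp
  define d where "d = min 1 (e0 / c)"
  have d: "d > 0" unfolding d_def using e0 c1 by simp
  have main: "(\<forall>p \<in> voronoi (lattice_gen B1). (1 / (1 + eps)) *\<^sub>R p \<in> voronoi (lattice_gen B)) \<and>
      (\<forall>p \<in> voronoi (lattice_gen B). (1 / (1 + eps)) *\<^sub>R p \<in> voronoi (lattice_gen B1))"
    if B1: "invertible B1" and nd: "norm (B1 - B) < d" for B1
  proof -
    define eta where "eta = c * norm (B1 - B)"
    have eta0: "eta \<ge> 0" unfolding eta_def using c1 by simp
    have "eta \<le> c * (e0 / c)" unfolding eta_def using nd c1 unfolding d_def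
      by (intro mult_left_mono) auto
    then have eta_e0: "eta \<le> e0" using c1 by simp
    have eK: "eta * K' \<le> 1"
    proof -
      have "eta * K' \<le> (1 / K') * K'" using eta_e0 K' unfolding e0_def by (intro mult_right_mono) auto
      then show ?thesis using K' by simp
    qed
    have eeps: "eta * (3 * K' + 2 * C * K' * K') \<le> eps"
    proof -
      have "eta * (3 * K' + 2 * C * K' * K') \<le> (eps / (3 * K' + 2 * C * K' * K')) * (3 * K' + 2 * C * K' * K')"
        using eta_e0 den unfolding e0_def by (intro mult_right_mono) auto
      then show ?thesis using den by simp
    qed
    have diff: "norm (B1 *v x - B *v x) \<le> eta * norm x" "norm (B *v x - B1 *v x) \<le> eta * norm x" for x
    proof -
      have "norm (B1 *v x - B *v x) = norm ((B1 - B) *v x)" by (simp add: matrix_vector_mult_diff_rdistrib)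
      also have "\<dots> \<le> eta * norm x" unfolding eta_def c_def by (rule mv_norm_le)
      finally show "norm (B1 *v x - B *v x) \<le> eta * norm x" .
      then show "norm (B *v x - B1 *v x) \<le> eta * norm x" by (simp add: norm_minus_commute)
    qed
    have nB1: "norm B1 \<le> norm B + 1"
      using norm_triangle_ineq[of B "B1 - B"] nd unfolding d_def by simp
    have covB1: "covc B1 \<le> C" unfolding covc_def C_def c_def using nB1
      by (intro mult_right_mono mult_left_mono) auto
    have covB: "covc B \<le> C" unfolding covc_def C_def c_def
      by (intro mult_right_mono mult_left_mono) auto
    show ?thesis
    proof (intro conjI ballI)
      fix p assume p: "p \<in> voronoi (lattice_gen B1)"
      have pC: "norm p \<le> C" using vor_bounded[OF B1 p] covB1 by linarith
      show "(1 / (1 + eps)) *\<^sub>R p \<in> voronoi (lattice_gen B)"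
      proof (rule scaled_in_vor[OF eps])
        fix q assume q: "q \<in> lattice_gen B - {0}"
        then obtain x where x: "zvec x" "q = B *v x" using lat_mem by blast
        have "x \<noteq> 0" using x q by auto
        then have x1: "norm x \<ge> 1" using int_vec_norm_ge1 x(1) unfolding zvec_def by blast
        have "K * norm (B *v x) \<le> (2 * K) * norm (B *v x)" using K(1) by (intro mult_right_mono) auto
        then have xa: "norm x \<le> K' * norm (B *v x)" using K(2)[of x] unfolding K'_def by linarith
        show "2 * (p \<bullet> q) \<le> (1 + eps) * (q \<bullet> q)" unfolding x(2)
          by (rule core_ineq[OF vor_lat_ineq[OF p x(1)] pC diff(2) xa x1 eK eeps eta0 less_imp_le[OF K'] C])
      qed
    next
      fix p assume p: "p \<in> voronoi (lattice_gen B)"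
      have pC: "norm p \<le> C" using vor_bounded[OF B p] covB by linarith
      show "(1 / (1 + eps)) *\<^sub>R p \<in> voronoi (lattice_gen B1)"
      proof (rule scaled_in_vor[OF eps])
        fix q assume q: "q \<in> lattice_gen B1 - {0}"
        then obtain x where x: "zvec x" "q = B1 *v x" using lat_mem by blast
        have "x \<noteq> 0" using x q by auto
        then have x1: "norm x \<ge> 1" using int_vec_norm_ge1 x(1) unfolding zvec_def by blast
        have "norm x \<le> K * norm (B *v x)" by (rule K(2))
        also have "\<dots> \<le> K * (norm (B1 *v x) + eta * norm x)"
          using diff(2)[of x] norm_triangle_sub[of "B *v x" "B1 *v x"] K(1)
          by (intro mult_left_mono) (auto simp: norm_minus_commute)
        also have "\<dots> = K * norm (B1 *v x) + (eta * K) * norm x" by (simp add: algebra_simps)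
        also have "\<dots> \<le> K * norm (B1 *v x) + (1/2) * norm x"
          using eK unfolding K'_def by (intro add_left_mono mult_right_mono) auto
        finally have xa: "norm x \<le> K' * norm (B1 *v x)" unfolding K'_def by simp
        show "2 * (p \<bullet> q) \<le> (1 + eps) * (q \<bullet> q)" unfolding x(2)
          by (rule core_ineq[OF vor_lat_ineq[OF p x(1)] pC diff(1) xa x1 eK eeps eta0 less_imp_le[OF K'] C])
      qed
    qed
  qed
  show ?thesis using that d main by blast
qed

lemma ds_near:
  fixes B :: "real^'n^'n"
  assumes B: "invertible B" and e: "e > 0"
  obtains d where "d > 0" "\<And>B1. invertible B1 \<Longrightarrow> norm (B1 - B) < d \<Longrightarrow>
     ds (lattice_gen B1) (lattice_gen B) \<le> e"
proof -
  obtain d where d: "d > 0" "\<And>B1. invertible B1 \<Longrightarrow> norm (B1 - B) < d \<Longrightarrow>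
      (\<forall>p \<in> voronoi (lattice_gen B1). (1 / (1 + e)) *\<^sub>R p \<in> voronoi (lattice_gen B)) \<and>
      (\<forall>p \<in> voronoi (lattice_gen B). (1 / (1 + e)) *\<^sub>R p \<in> voronoi (lattice_gen B1))"
    using vor_perturb[OF B e] by blast
  have "ds (lattice_gen B1) (lattice_gen B) \<le> e" if B1: "invertible B1" and nd: "norm (B1 - B) < d" for B1
  proof -
    define L1 where "L1 = lattice_gen B1"
    define L where "L = lattice_gen B"
    have LL: "is_lattice L1" "is_lattice L" unfolding L1_def L_def is_lattice_def using B B1 by blast+
    note inc = d(2)[OF B1 nd, folded L1_def L_def]
    have ne: "1 + e \<noteq> 0" using e by simp
    have s1: "1 + e \<in> SS L1 L"
    proof -
      have "(\<lambda>p. mat 1 *v p) ` voronoi L1 \<subseteq> (\<lambda>p. (1 + e) *\<^sub>R p) ` voronoi L"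
      proof
        fix x assume "x \<in> (\<lambda>p. mat 1 *v p) ` voronoi L1"
        then have "x \<in> voronoi L1" by simp
        then show "x \<in> (\<lambda>p. (1 + e) *\<^sub>R p) ` voronoi L" using in_scaled[OF ne, of x "voronoi L"] inc by blast
      qed
      then show ?thesis unfolding SS_def mem_Collect_eq using e rot_id by (intro conjI exI[of _ "mat 1"]) auto
    qed
    have s2: "1 + e \<in> SS L L1"
    proof -
      have "(\<lambda>p. mat 1 *v p) ` voronoi L \<subseteq> (\<lambda>p. (1 + e) *\<^sub>R p) ` voronoi L1"
      proof
        fix x assume "x \<in> (\<lambda>p. mat 1 *v p) ` voronoi L"
        then have "x \<in> voronoi L" by simp
        then show "x \<in> (\<lambda>p. (1 + e) *\<^sub>R p) ` voronoi L1" using in_scaled[OF ne, of x "voronoi L1"] inc by blast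
      qed
      then show ?thesis unfolding SS_def mem_Collect_eq using e rot_id by (intro conjI exI[of _ "mat 1"]) auto
    qed
    have a1: "scale L1 L \<le> 1 + e" unfolding scale_SS by (rule cInf_lower[OF s1 SS_bdd])
    have a2: "scale L L1 \<le> 1 + e" unfolding scale_SS by (rule cInf_lower[OF s2 SS_bdd])
    have pos: "max (scale L1 L) (scale L L1) > 0" using scale_pos[OF LL] by simp
    have "ln (max (scale L1 L) (scale L L1)) \<le> ln (1 + e)"
      using a1 a2 pos e by (subst ln_le_cancel_iff) auto
    also have "\<dots> \<le> e" using ln_le_minus_one[of "1 + e"] e by simp
    finally show ?thesis unfolding ds_def L1_def L_def .
  qed
  then show ?thesis using that d(1) by blast
qed

lemma ds_continuous:
  "continuous_on {(B, B'). invertible (B :: real^'n^'n) \<and> invertible (B' :: real^'n^'n)}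
        (\<lambda>(B, B'). ds (lattice_gen B) (lattice_gen B'))"
  unfolding continuous_on_iff
proof (intro ballI allI impI)
  fix z :: "(real^'n^'n) \<times> (real^'n^'n)" and e :: real
  assume z: "z \<in> {(B, B'). invertible B \<and> invertible B'}" and e: "e > 0"
  obtain B B' where zB: "z = (B, B')" "invertible B" "invertible B'" using z by auto
  have e3: "e / 3 > 0" using e by simp
  obtain d1 where d1: "d1 > 0" "\<And>B1. invertible B1 \<Longrightarrow> norm (B1 - B) < d1 \<Longrightarrow>
     ds (lattice_gen B1) (lattice_gen B) \<le> e / 3" using ds_near[OF zB(2) e3] by blast
  obtain d2 where d2: "d2 > 0" "\<And>B1. invertible B1 \<Longrightarrow> norm (B1 - B') < d2 \<Longrightarrow>
     ds (lattice_gen B1) (lattice_gen B') \<le> e / 3" using ds_near[OF zB(3) e3] by blast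
  show "\<exists>d>0. \<forall>z'\<in>{(B, B'). invertible B \<and> invertible B'}. dist z' z < d \<longrightarrow>
     dist ((\<lambda>(B, B'). ds (lattice_gen B) (lattice_gen B')) z') ((\<lambda>(B, B'). ds (lattice_gen B) (lattice_gen B')) z) < e"
  proof (intro exI[of _ "min d1 d2"] conjI ballI impI)
    show "min d1 d2 > 0" using d1 d2 by simp
    fix z' assume z': "z' \<in> {(B, B'). invertible B \<and> invertible B'}" and dz: "dist z' z < min d1 d2"
    obtain B1 B1' where zB1: "z' = (B1, B1')" "invertible B1" "invertible B1'" using z' by auto
    have "norm (B1 - B) < d1" using dist_fst_le[of z' z] dz zB zB1 by (simp add: dist_norm)
    then have h1: "ds (lattice_gen B1) (lattice_gen B) \<le> e / 3" using d1(2) zB1(2) by blast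
    have "norm (B1' - B') < d2" using dist_snd_le[of z' z] dz zB zB1 by (simp add: dist_norm)
    then have h2: "ds (lattice_gen B1') (lattice_gen B') \<le> e / 3" using d2(2) zB1(3) by blast
    define L where "L = lattice_gen B"
    define L' where "L' = lattice_gen B'"
    define L1 where "L1 = lattice_gen B1"
    define L1' where "L1' = lattice_gen B1'"
    have lat: "is_lattice L" "is_lattice L'" "is_lattice L1" "is_lattice L1'"
      unfolding L_def L'_def L1_def L1'_def is_lattice_def using zB zB1 by blast+
    have t1: "ds L1 L1' \<le> ds L1 L + ds L L' + ds L' L1'"
      using ds_tri[OF lat(3,1,4)] ds_tri[OF lat(1,2,4)] by linarith
    have t2: "ds L L' \<le> ds L L1 + ds L1 L1' + ds L1' L'"
      using ds_tri[OF lat(1,3,2)] ds_tri[OF lat(3,4,2)] by linarith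
    have "ds L L1 = ds L1 L" "ds L' L1' = ds L1' L'" using ds_sym by blast+
    then have "\<bar>ds L1 L1' - ds L L'\<bar> \<le> 2 * (e / 3)" using t1 t2 h1 h2
      unfolding L_def L'_def L1_def L1'_def by linarith
    also have "\<dots> < e" using e by simp
    finally show "dist ((\<lambda>(B, B'). ds (lattice_gen B) (lattice_gen B')) z') ((\<lambda>(B, B'). ds (lattice_gen B) (lattice_gen B')) z) < e"
      unfolding zB(1) zB1(1) L_def L'_def L1_def L1'_def by (simp add: dist_real_def)
  qed
qed

theorem theorem4:
  fixes L L' L'' :: "(real^'n) set"
  assumes "is_lattice L" and "is_lattice L'" and "is_lattice L''"
  shows "ds L L' \<ge> 0
    \<and> (ds L L' = 0 \<longleftrightarrow> (\<exists>R. rotation R \<and> (\<lambda>p. R *v p) ` L = L'))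
    \<and> ds L L' = ds L' L
    \<and> ds L L' + ds L' L'' \<ge> ds L L''
    \<and> continuous_on {(B, B'). invertible (B :: real^'n^'n) \<and> invertible (B' :: real^'n^'n)}
        (\<lambda>(B, B'). ds (lattice_gen B) (lattice_gen B'))
    \<and> (\<forall>c::real. c > 0 \<longrightarrow> ds ((\<lambda>p. c *\<^sub>R p) ` L) ((\<lambda>p. c *\<^sub>R p) ` L') = ds L L')"
proof (intro conjI allI impI)
  show "ds L L' \<ge> 0" using ds_nonneg assms by blast
  show "ds L L' = 0 \<longleftrightarrow> (\<exists>R. rotation R \<and> (\<lambda>p. R *v p) ` L = L')"
    using ds0_equiv[OF assms(1,2)] equiv_ds0[OF assms(1,2)] by blast
  show "ds L L' = ds L' L" by (rule ds_sym)
  show "ds L L' + ds L' L'' \<ge> ds L L''" using ds_tri[OF assms] by simp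
  show "continuous_on {(B, B'). invertible (B :: real^'n^'n) \<and> invertible (B' :: real^'n^'n)}
        (\<lambda>(B, B'). ds (lattice_gen B) (lattice_gen B'))" by (rule ds_continuous)
  fix c :: real assume "c > 0"
  then show "ds ((\<lambda>p. c *\<^sub>R p) ` L) ((\<lambda>p. c *\<^sub>R p) ` L') = ds L L'" by (rule ds_scale)
qed

end
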